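(* Let $E,F$ be projections in $\mathcal B(\mathcal H)$. The following are equivalent: (1) $E\wedge F=0$ and $(E\vee F)\mathcal H=\{\xi+\beta:\ \xi\in E\mathcal H,\ \beta\in F\mathcal H\}$; (2) $E-F$ restricts to an invertible operator in $\mathcal B((E\vee F)\mathcal H)$; (3) $(E\vee F-F)E$ is an invertible operator in $\mathcal B(E\mathcal H,(E\vee F-F)\mathcal H)$. If these conditions hold, then $$\|((E-F)|_{(E\vee F)\mathcal H})^{-1}\|=(1-\|EF\|^2)^{-1/2}=\|[(E\vee F-F)E]^{-1}\|.$$ *)

theory Defs
  imports "HOL-Analysis.Analysis"
begin

text \<open>Hilbert space: a (real) complete inner product space, type class
  {real_inner, complete_space}.  Operators are functions 'a \<Rightarrow> 'a.\<close>

definition is_projection :: "('a::real_inner \<Rightarrow> 'a) \<Rightarrow> bool" where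
  "is_projection E \<longleftrightarrow> bounded_linear E \<and> (\<forall>x. E (E x) = E x)
     \<and> (\<forall>x y. inner (E x) y = inner x (E y))"

definition proj_onto :: "'a::real_inner set \<Rightarrow> ('a \<Rightarrow> 'a)" where
  "proj_onto M = (THE P. is_projection P \<and> range P = M)"

definition proj_meet :: "('a::real_inner \<Rightarrow> 'a) \<Rightarrow> ('a \<Rightarrow> 'a) \<Rightarrow> ('a \<Rightarrow> 'a)" where
  "proj_meet E F = proj_onto (range E \<inter> range F)"

definition proj_join :: "('a::real_inner \<Rightarrow> 'a) \<Rightarrow> ('a \<Rightarrow> 'a) \<Rightarrow> ('a \<Rightarrow> 'a)" where
  "proj_join E F = proj_onto (closure {E x + F y | x y. True})"

definition invertible_between :: "('a::real_normed_vector \<Rightarrow> 'b::real_normed_vector) \<Rightarrow> 'a set \<Rightarrow> 'b set \<Rightarrow> bool" where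
  "invertible_between T A B \<longleftrightarrow> bij_betw T A B \<and> (\<exists>C. \<forall>y\<in>B. norm (inv_into A T y) \<le> C * norm y)"

definition opnorm_on :: "'a set \<Rightarrow> ('a::real_normed_vector \<Rightarrow> 'b::real_normed_vector) \<Rightarrow> real" where
  "opnorm_on B G = (SUP y\<in>B - {0}. norm (G y) / norm y)"

end

theory Submission
  imports Defs
begin

lemma proj_lin: "is_projection P \<Longrightarrow> bounded_linear P"
  and proj_idem: "is_projection P \<Longrightarrow> P (P x) = P x"
  and proj_sa: "is_projection P \<Longrightarrow> inner (P x) y = inner x (P y)"
  unfolding is_projection_def by auto

lemma proj_linear: "is_projection P \<Longrightarrow> linear P"
  using proj_lin bounded_linear.linear by blast

lemma proj_diff: "is_projection P \<Longrightarrow> P (x - y) = P x - P y"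
  using proj_linear linear_diff by blast
lemma proj_add: "is_projection P \<Longrightarrow> P (x + y) = P x + P y"
  using proj_linear linear_add by blast
lemma proj_scale: "is_projection P \<Longrightarrow> P (c *\<^sub>R x) = c *\<^sub>R P x"
  using proj_linear linear_scale by blast
lemma proj_zero: "is_projection P \<Longrightarrow> P 0 = 0"
  using proj_linear linear_0 by blast

lemma proj_range_iff: "is_projection P \<Longrightarrow> x \<in> range P \<longleftrightarrow> P x = x"
  by (metis proj_idem rangeE rangeI)

lemma proj_orth: "is_projection P \<Longrightarrow> inner (x - P x) (P y) = 0"
proof -
  assume p: "is_projection P"
  have "inner (x - P x) (P y) = inner (P (x - P x)) y" using proj_sa[OF p] by simp
  also have "\<dots> = 0" using p by (simp add: proj_diff proj_idem)
  finally show ?thesis .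
qed

lemma proj_orth_range: "is_projection P \<Longrightarrow> m \<in> range P \<Longrightarrow> inner (x - P x) m = 0"
  using proj_orth by blast

lemma proj_inner_self: "is_projection P \<Longrightarrow> inner (P x) x = (norm (P x))\<^sup>2"
  by (metis proj_idem proj_sa power2_norm_eq_inner)

lemma proj_pyth: "is_projection P \<Longrightarrow> (norm x)\<^sup>2 = (norm (P x))\<^sup>2 + (norm (x - P x))\<^sup>2"
proof -
  assume p: "is_projection P"
  have "orthogonal (P x) (x - P x)" using proj_orth[OF p, of x x]
    by (simp add: orthogonal_def inner_commute)
  from norm_add_Pythagorean[OF this] show ?thesis by simp
qed

lemma proj_norm_le: "is_projection P \<Longrightarrow> norm (P x) \<le> norm x"
proof -
  assume p: "is_projection P"
  have "(norm (P x))\<^sup>2 \<le> (norm x)\<^sup>2" using proj_pyth[OF p, of x] by simp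
  then show ?thesis using power2_le_imp_le norm_ge_zero by blast
qed

lemma proj_range_eq: "is_projection P \<Longrightarrow> range P = {x. P x = x}"
  using proj_range_iff by blast

lemma proj_closed: "is_projection P \<Longrightarrow> closed (range P)"
proof -
  assume p: "is_projection P"
  have "continuous_on UNIV P" using proj_lin[OF p] linear_continuous_on by blast
  then have "closed {x. P x = x}" by (intro closed_Collect_eq continuous_on_id)
  then show ?thesis using proj_range_eq[OF p] by simp
qed

lemma proj_subspace: "is_projection P \<Longrightarrow> subspace (range P)"
  unfolding subspace_def proj_range_eq
  by (simp add: proj_add proj_scale proj_zero)

lemma subspace_closure':
  fixes S :: "'a::real_normed_vector set"
  assumes "subspace S" shows "subspace (closure S)"
proof -
  have "x + y \<in> closure S" if xy: "x \<in> closure S" "y \<in> closure S" for x y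
  proof -
    obtain f where f: "\<forall>n. f n \<in> S" "f \<longlonglongrightarrow> x"
      using xy(1) unfolding closure_sequential by blast
    obtain g where g: "\<forall>n. g n \<in> S" "g \<longlonglongrightarrow> y"
      using xy(2) unfolding closure_sequential by blast
    have "(\<lambda>n. f n + g n) \<longlonglongrightarrow> x + y" using f g by (intro tendsto_intros)
    moreover have "\<forall>n. f n + g n \<in> S" using f g assms subspace_add by blast
    ultimately show ?thesis unfolding closure_sequential by (intro exI[where x="\<lambda>n. f n + g n"]) simp
  qed
  moreover have "c *\<^sub>R x \<in> closure S" if xy: "x \<in> closure S" for x c
  proof -
    obtain f where f: "\<forall>n. f n \<in> S" "f \<longlonglongrightarrow> x"
      using xy(1) unfolding closure_sequential by blast
    have "(\<lambda>n. c *\<^sub>R f n) \<longlonglongrightarrow> c *\<^sub>R x" using f by (intro tendsto_intros)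
    moreover have "\<forall>n. c *\<^sub>R f n \<in> S" using f assms subspace_scale by blast
    ultimately show ?thesis unfolding closure_sequential by (intro exI[where x="\<lambda>n. c *\<^sub>R f n"]) simp
  qed
  moreover have "0 \<in> closure S" using assms subspace_0 closure_subset by blast
  ultimately show ?thesis unfolding subspace_def by blast
qed

lemma parallelogram':
  fixes a b :: "'a::real_inner"
  shows "(norm (a - b))\<^sup>2 + (norm (a + b))\<^sup>2 = 2 * (norm a)\<^sup>2 + 2 * (norm b)\<^sup>2"
  by (simp add: power2_norm_eq_inner inner_add inner_diff inner_commute algebra_simps)

lemma orth_decomp:
  fixes M :: "'a::{real_inner,complete_space} set"
  assumes sub: "subspace M" and cl: "closed M"
  shows "\<exists>m\<in>M. \<forall>y\<in>M. inner (x - m) y = 0"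
proof -
  define d where "d = infdist x M"
  have ne: "M \<noteq> {}" using sub subspace_0 by blast
  have d0: "d \<ge> 0" unfolding d_def by (rule infdist_nonneg)
  have dle: "d \<le> dist x a" if "a \<in> M" for a unfolding d_def using that by (rule infdist_le)
  have bdd: "bdd_below ((\<lambda>a. dist x a) ` M)" by (rule bdd_belowI[where m=0]) auto
  have approx: "\<exists>a\<in>M. dist x a < d + e" if "e > 0" for e
  proof -
    have "(INF a\<in>M. dist x a) < d + e" using that ne by (simp add: d_def infdist_notempty)
    then show ?thesis using ne bdd by (subst (asm) cINF_less_iff) auto
  qed
  define ee where "ee n = inverse (real (Suc n))" for n
  have ee_pos: "ee n > 0" for n unfolding ee_def by simp
  have ee_le1: "ee n \<le> 1" for n unfolding ee_def by (simp add: field_simps)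
  have "\<forall>n. \<exists>a. a \<in> M \<and> dist x a < d + ee n" using approx ee_pos by blast
  then obtain m where m: "\<And>n. m n \<in> M" and md: "\<And>n. dist x (m n) < d + ee n"
    by metis
  have est: "(dist (m n) (m k))\<^sup>2 \<le> (4 * d + 2) * (ee n + ee k)" for n k
  proof -
    let ?a = "x - m n" and ?b = "x - m k"
    have mid: "(1/2) *\<^sub>R (m n + m k) \<in> M" using m sub by (simp add: subspace_add subspace_scale)
    have "?a + ?b = 2 *\<^sub>R (x - (1/2) *\<^sub>R (m n + m k))" by (simp add: algebra_simps scaleR_2)
    then have "norm (?a + ?b) = 2 * dist x ((1/2) *\<^sub>R (m n + m k))" by (simp add: dist_norm)
    then have ab: "norm (?a + ?b) \<ge> 2 * d" using dle[OF mid] by simp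
    have "(norm (?a + ?b))\<^sup>2 \<ge> (2 * d)\<^sup>2" using ab d0 by (intro power_mono) auto
    moreover have "(norm ?a)\<^sup>2 \<le> (d + ee n)\<^sup>2"
      using md[of n] by (intro power_mono) (auto simp: dist_norm)
    moreover have "(norm ?b)\<^sup>2 \<le> (d + ee k)\<^sup>2"
      using md[of k] by (intro power_mono) (auto simp: dist_norm)
    moreover have "(norm (?a - ?b))\<^sup>2 = (dist (m n) (m k))\<^sup>2" by (simp add: dist_norm norm_minus_commute)
    ultimately have "(dist (m n) (m k))\<^sup>2 \<le> 2 * (d + ee n)\<^sup>2 + 2 * (d + ee k)\<^sup>2 - (2*d)\<^sup>2"
      using parallelogram'[of ?a ?b] by linarith
    also have "\<dots> = 4 * d * (ee n + ee k) + 2 * (ee n)\<^sup>2 + 2 * (ee k)\<^sup>2"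
      by (simp add: power2_eq_square algebra_simps)
    also have "\<dots> \<le> 4 * d * (ee n + ee k) + 2 * ee n + 2 * ee k"
      using ee_le1[of n] ee_le1[of k] ee_pos[of n] ee_pos[of k]
      by (intro add_mono) (auto simp: power2_eq_square mult_le_cancel_left1)
    also have "\<dots> = (4 * d + 2) * (ee n + ee k)" by (simp add: algebra_simps)
    finally show ?thesis .
  qed
  have "Cauchy m"
  proof (rule metric_CauchyI)
    fix e :: real assume e: "e > 0"
    obtain N where N: "inverse (real (Suc N)) < e\<^sup>2 / (2 * (4 * d + 2))"
      using reals_Archimedean e d0 by (metis divide_pos_pos mult_pos_pos zero_less_numeral zero_less_power add_nonneg_pos mult_nonneg_nonneg zero_le_numeral less_numeral_extra(1))
    show "\<exists>M. \<forall>a\<ge>M. \<forall>b\<ge>M. dist (m a) (m b) < e"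
    proof (intro exI allI impI)
      fix a b assume ab: "N \<le> a" "N \<le> b"
      have "ee a \<le> ee N" "ee b \<le> ee N" using ab unfolding ee_def by (auto simp: field_simps)
      then have "(4 * d + 2) * (ee a + ee b) \<le> (4 * d + 2) * (2 * ee N)"
        using d0 by (intro mult_left_mono) auto
      also have "\<dots> < (4 * d + 2) * (2 * (e\<^sup>2 / (2 * (4 * d + 2))))"
        using N d0 unfolding ee_def by (intro mult_strict_left_mono) auto
      also have "\<dots> = e\<^sup>2" using d0 by (simp add: field_simps)
      finally have "(dist (m a) (m b))\<^sup>2 < e\<^sup>2" using est[of a b] by linarith
      then show "dist (m a) (m b) < e" using e by (simp add: power_less_imp_less_base)
    qed
  qed
  then obtain L where L: "m \<longlonglongrightarrow> L" using convergent_eq_Cauchy by blast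
  have LM: "L \<in> M" using closed_sequentially[OF cl m L] .
  have "dist x L \<le> d"
  proof (rule LIMSEQ_le)
    show "(\<lambda>n. dist x (m n)) \<longlonglongrightarrow> dist x L" using L by (intro tendsto_intros)
    show "(\<lambda>n. d + ee n) \<longlonglongrightarrow> d" unfolding ee_def
      using tendsto_add[OF tendsto_const LIMSEQ_inverse_real_of_nat, of d] by simp
    show "\<exists>N. \<forall>n\<ge>N. dist x (m n) \<le> d + ee n" using md less_imp_le by blast
  qed
  have "inner (x - L) y = 0" if y: "y \<in> M" for y
  proof (cases "y = 0")
    case True then show ?thesis by simp
  next
    case False
    define a where "a = inner (x - L) y"
    define b where "b = (norm y)\<^sup>2"
    have b0: "b > 0" using False unfolding b_def by simp
    define t where "t = a / b"
    have "L + t *\<^sub>R y \<in> M" using LM y sub by (simp add: subspace_add subspace_scale)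
    then have "dist x L \<le> dist x (L + t *\<^sub>R y)" using dle \<open>dist x L \<le> d\<close> by force
    then have "(norm (x - L))\<^sup>2 \<le> (norm ((x - L) - t *\<^sub>R y))\<^sup>2"
      by (intro power_mono) (auto simp: dist_norm algebra_simps)
    also have "\<dots> = (norm (x - L))\<^sup>2 - 2 * t * a + t\<^sup>2 * b"
      unfolding a_def b_def power2_norm_eq_inner
      by (simp add: inner_diff inner_commute algebra_simps power2_eq_square)
    finally have "0 \<le> - 2 * t * a + t\<^sup>2 * b" by simp
    also have "\<dots> = - (a\<^sup>2 / b)" unfolding t_def using b0 by (simp add: field_simps power2_eq_square)
    finally have "a\<^sup>2 / b \<le> 0" by simp
    then have "a\<^sup>2 \<le> 0" using b0 by (simp add: divide_le_0_iff)
    then show ?thesis unfolding a_def by simp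
  qed
  then show ?thesis using LM by blast
qed

lemma orth_unique:
  fixes M :: "'a::real_inner set"
  assumes sub: "subspace M" and m1: "m1 \<in> M" "\<forall>y\<in>M. inner (x - m1) y = 0"
    and m2: "m2 \<in> M" "\<forall>y\<in>M. inner (x - m2) y = 0"
  shows "m1 = m2"
proof -
  have d: "m1 - m2 \<in> M" using sub m1 m2 subspace_diff by blast
  have "inner (m1 - m2) (m1 - m2) = inner (x - m2) (m1 - m2) - inner (x - m1) (m1 - m2)"
    by (simp add: inner_diff algebra_simps)
  also have "\<dots> = 0" using d m1 m2 by simp
  finally show ?thesis by simp
qed

lemma proj_exists:
  fixes M :: "'a::{real_inner,complete_space} set"
  assumes sub: "subspace M" and cl: "closed M"
  shows "\<exists>P. is_projection P \<and> range P = M"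
proof -
  define Q where "Q x m = (m\<in>M \<and> (\<forall>y\<in>M. inner (x - m) y = 0))" for x m
  define P where "P x = (SOME m. Q x m)" for x
  have PQ: "Q x (P x)" for x
    unfolding P_def using orth_decomp[OF sub cl, of x] by (metis (mono_tags, lifting) Q_def someI_ex)
  have uniq: "Q x m \<Longrightarrow> P x = m" for x m
    using PQ[of x] orth_unique[OF sub] unfolding Q_def by blast
  have PM: "P x \<in> M" for x using PQ unfolding Q_def by blast
  have Po: "inner (x - P x) y = 0" if "y \<in> M" for x y using PQ that unfolding Q_def by blast
  have add: "P (x + y) = P x + P y" for x y
  proof (rule uniq)
    show "Q (x + y) (P x + P y)" unfolding Q_def
    proof
      show "P x + P y \<in> M" using PM sub subspace_add by blast
      show "\<forall>z\<in>M. inner (x + y - (P x + P y)) z = 0"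
      proof
        fix z assume "z \<in> M"
        then have "inner (x - P x) z = 0" "inner (y - P y) z = 0" using Po by auto
        then show "inner (x + y - (P x + P y)) z = 0" by (simp add: inner_diff inner_add algebra_simps)
      qed
    qed
  qed
  have scale: "P (c *\<^sub>R x) = c *\<^sub>R P x" for c x
  proof (rule uniq)
    show "Q (c *\<^sub>R x) (c *\<^sub>R P x)" unfolding Q_def
    proof
      show "c *\<^sub>R P x \<in> M" using PM sub subspace_scale by blast
      show "\<forall>z\<in>M. inner (c *\<^sub>R x - c *\<^sub>R P x) z = 0"
      proof
        fix z assume "z \<in> M"
        then have "inner (x - P x) z = 0" using Po by auto
        then show "inner (c *\<^sub>R x - c *\<^sub>R P x) z = 0"
          by (metis inner_scaleR_left mult_zero_right scaleR_right_diff_distrib)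
      qed
    qed
  qed
  have Pfix: "P m = m" if "m \<in> M" for m
    by (rule uniq) (use that in \<open>simp add: Q_def\<close>)
  have pyth: "(norm x)\<^sup>2 = (norm (P x))\<^sup>2 + (norm (x - P x))\<^sup>2" for x
  proof -
    have "orthogonal (P x) (x - P x)" using Po[OF PM, of x x]
      by (simp add: orthogonal_def inner_commute)
    from norm_add_Pythagorean[OF this] show ?thesis by simp
  qed
  have nle: "norm (P x) \<le> norm x" for x
  proof -
    have "(norm (P x))\<^sup>2 \<le> (norm x)\<^sup>2" using pyth[of x] by simp
    then show ?thesis using power2_le_imp_le norm_ge_zero by blast
  qed
  have bl: "bounded_linear P"
  proof (rule bounded_linear_intro[where K=1])
    show "P (x + y) = P x + P y" for x y by (rule add)
    show "P (r *\<^sub>R x) = r *\<^sub>R P x" for r x by (rule scale)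
    show "norm (P x) \<le> norm x * 1" for x using nle by simp
  qed
  have sa: "inner (P x) y = inner x (P y)" for x y
  proof -
    have "inner (P x) y = inner (P x) (P y) + inner (P x) (y - P y)" by (simp add: inner_diff)
    also have "inner (P x) (y - P y) = 0" using Po[OF PM, of y x] by (simp add: inner_commute)
    finally have 1: "inner (P x) y = inner (P x) (P y)" by simp
    have "inner x (P y) = inner (P x) (P y) + inner (x - P x) (P y)" by (simp add: inner_diff)
    also have "inner (x - P x) (P y) = 0" using Po[OF PM] by simp
    finally show ?thesis using 1 by simp
  qed
  have "is_projection P" unfolding is_projection_def using bl Pfix PM sa by blast
  moreover have "range P = M" using PM Pfix by (metis image_subset_iff rangeI subsetI subset_antisym)
  ultimately show ?thesis by blast
qed

lemma proj_unique:
  assumes p: "is_projection P" and q: "is_projection Q" and r: "range P = range Q"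
  shows "P = Q"
proof
  fix x
  have sub: "subspace (range P)" by (rule proj_subspace[OF p])
  show "P x = Q x"
  proof (rule orth_unique[OF sub])
    show "P x \<in> range P" by simp
    show "\<forall>y\<in>range P. inner (x - P x) y = 0" using proj_orth_range[OF p] by blast
    show "Q x \<in> range P" using r by simp
    show "\<forall>y\<in>range P. inner (x - Q x) y = 0" using proj_orth_range[OF q] r by blast
  qed
qed

lemma proj_onto:
  fixes M :: "'a::{real_inner,complete_space} set"
  assumes "subspace M" and "closed M"
  shows "is_projection (proj_onto M) \<and> range (proj_onto M) = M"
proof -
  obtain P where P: "is_projection P \<and> range P = M" using proj_exists[OF assms] by blast
  have "\<exists>!P. is_projection P \<and> range P = M"
    using P proj_unique by blast
  then show ?thesis unfolding proj_onto_def by (rule theI')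
qed

lemma proj_comp_fix:
  assumes p: "is_projection P" and q: "is_projection Q" and h: "\<And>x. Q (P x) = P x"
  shows "P (Q x) = P x"
proof -
  have "inner (P (Q x) - P x) y = 0" for y
  proof -
    have "inner (P (Q x)) y = inner (Q x) (P y)" using proj_sa[OF p] by simp
    also have "\<dots> = inner x (Q (P y))" using proj_sa[OF q] by simp
    also have "\<dots> = inner (P x) y" using h proj_sa[OF p] by simp
    finally show ?thesis by (simp add: inner_diff)
  qed
  from this[of "P (Q x) - P x"] show ?thesis by simp
qed

lemma powr_mhalf: "q > 0 \<Longrightarrow> q powr (-1/2) = 1 / sqrt q"
proof -
  assume q: "q > 0"
  have "q powr (-1/2) = q powr (- (1/2))" by simp
  also have "\<dots> = 1 / q powr (1/2)" by (rule powr_minus_divide)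
  also have "\<dots> = 1 / sqrt q" using q by (simp add: powr_half_sqrt)
  finally show ?thesis .
qed

lemma sq_bound:
  fixes q a b :: real
  assumes q: "q > 0" and a: "a \<ge> 0" and b: "b \<ge> 0" and h: "q * a\<^sup>2 \<le> b\<^sup>2"
  shows "a \<le> q powr (-1/2) * b"
proof -
  have "a\<^sup>2 * q \<le> b\<^sup>2" using h by (simp only: mult.commute)
  then have "a\<^sup>2 \<le> b\<^sup>2 / q" using q by (simp only: pos_le_divide_eq)
  also have "b\<^sup>2 / q = (b / sqrt q)\<^sup>2" using q by (simp only: power_divide real_sqrt_pow2 less_imp_le)
  finally have 1: "a\<^sup>2 \<le> (b / sqrt q)\<^sup>2" .
  have "0 \<le> b / sqrt q" using b q by simp
  with 1 have "a \<le> b / sqrt q" by (rule power2_le_imp_le)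
  then show ?thesis using powr_mhalf[OF q] by simp
qed

lemma le_eps_lemma:
  fixes a b C :: real
  assumes "C \<ge> 0" "\<And>e. e > 0 \<Longrightarrow> a \<le> b + e * C"
  shows "a \<le> b"
proof (rule field_le_epsilon)
  fix e :: real assume e: "e > 0"
  have "a \<le> b + (e / (C + 1)) * C" using assms(2)[of "e / (C + 1)"] e assms(1) by simp
  also have "(e / (C + 1)) * C \<le> e" using assms e by (simp add: field_simps)
  finally show "a \<le> b + e" by simp
qed

locale twoproj =
  fixes E F :: "'a::{real_inner,complete_space} \<Rightarrow> 'a"
  assumes pE: "is_projection E" and pF: "is_projection F"
begin

definition S where "S = {E x + F y | x y. True}"
definition J where "J = proj_join E F"
definition c where "c = onorm (E \<circ> F)"
definition Y where "Y = range (\<lambda>x. J x - F x)"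

lemma S_sub: "subspace S"
  unfolding subspace_def S_def
proof (intro conjI ballI allI)
  have "0 = E 0 + F 0" using proj_zero[OF pE] proj_zero[OF pF] by simp
  then show "0 \<in> {E x + F y |x y. True}" by blast
  fix a b assume "a \<in> {E x + F y |x y. True}" "b \<in> {E x + F y |x y. True}"
  then obtain x y x' y' where "a = E x + F y" "b = E x' + F y'" by blast
  then have "a + b = E (x + x') + F (y + y')" using proj_add[OF pE] proj_add[OF pF] by (simp add: algebra_simps)
  then show "a + b \<in> {E x + F y |x y. True}" by blast
next
  fix r a assume "a \<in> {E x + F y |x y. True}"
  then obtain x y where "a = E x + F y" by blast
  then have "r *\<^sub>R a = E (r *\<^sub>R x) + F (r *\<^sub>R y)" using proj_scale[OF pE] proj_scale[OF pF]
    by (simp add: algebra_simps)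
  then show "r *\<^sub>R a \<in> {E x + F y |x y. True}" by blast
qed

lemma S_alt: "{\<xi> + \<beta> | \<xi> \<beta>. \<xi> \<in> range E \<and> \<beta> \<in> range F} = S"
  unfolding S_def by blast

lemma pJ: "is_projection J" and rJ: "range J = closure S"
  using proj_onto[OF subspace_closure'[OF S_sub] closed_closure]
  unfolding J_def proj_join_def S_def by auto

lemma E_in_S: "E x \<in> S" and F_in_S: "F x \<in> S"
proof -
  have "E x = E x + F 0" "F x = E 0 + F x" using proj_zero[OF pF] proj_zero[OF pE] by simp_all
  then show "E x \<in> S" "F x \<in> S" unfolding S_def by blast+
qed

lemma JE: "J (E x) = E x" and JF: "J (F x) = F x"
proof -
  have "E x \<in> closure S" "F x \<in> closure S" using E_in_S F_in_S closure_subset by blast+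
  then have "E x \<in> range J" "F x \<in> range J" using rJ by auto
  then show "J (E x) = E x" "J (F x) = F x" using proj_range_iff[OF pJ] by auto
qed

lemma EJ: "E (J x) = E x" and FJ: "F (J x) = F x"
  using proj_comp_fix[OF pE pJ JE] proj_comp_fix[OF pF pJ JF] by auto

lemma JH_sub: "subspace (range J)" and JH_closed: "closed (range J)"
  using proj_subspace[OF pJ] proj_closed[OF pJ] .

lemma EH_sub: "subspace (range E)" and EH_closed: "closed (range E)"
  using proj_subspace[OF pE] proj_closed[OF pE] .
lemma FH_sub: "subspace (range F)" and FH_closed: "closed (range F)"
  using proj_subspace[OF pF] proj_closed[OF pF] .

lemma EH_JH: assumes "x \<in> range E" shows "x \<in> range J"
proof -
  have "E x = x" using assms proj_range_iff[OF pE] by blast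
  then have "J x = x" using JE[of x] by simp
  then show ?thesis using proj_range_iff[OF pJ] by blast
qed
lemma FH_JH: assumes "x \<in> range F" shows "x \<in> range J"
proof -
  have "F x = x" using assms proj_range_iff[OF pF] by blast
  then have "J x = x" using JF[of x] by simp
  then show ?thesis using proj_range_iff[OF pJ] by blast
qed

lemma pJF: "is_projection (\<lambda>x. J x - F x)"
  unfolding is_projection_def
proof (intro conjI allI)
  show "bounded_linear (\<lambda>x. J x - F x)"
    using proj_lin[OF pJ] proj_lin[OF pF] by (rule bounded_linear_sub)
  fix x y
  show "J (J x - F x) - F (J x - F x) = J x - F x"
    using proj_diff[OF pJ] proj_diff[OF pF] proj_idem[OF pJ] proj_idem[OF pF] JF FJ by simp
  show "inner (J x - F x) y = inner x (J y - F y)"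
    using proj_sa[OF pJ] proj_sa[OF pF] by (simp add: inner_diff)
qed

lemma Y_iff: "z \<in> Y \<longleftrightarrow> J z = z \<and> F z = 0"
proof
  assume "z \<in> Y"
  then obtain x where "z = J x - F x" unfolding Y_def by blast
  then show "J z = z \<and> F z = 0"
    using proj_diff[OF pJ] proj_diff[OF pF] proj_idem[OF pJ] proj_idem[OF pF] JF FJ by simp
next
  assume "J z = z \<and> F z = 0"
  then have "z = J z - F z" by simp
  then show "z \<in> Y" unfolding Y_def by blast
qed

lemma Y_sub: "subspace Y" and Y_closed: "closed Y"
  using proj_subspace[OF pJF] proj_closed[OF pJF] unfolding Y_def by auto

lemma EF_bl: "bounded_linear (E \<circ> F)"
  using bounded_linear_compose[OF proj_lin[OF pE] proj_lin[OF pF]] by (simp add: comp_def)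

lemma c0: "c \<ge> 0" unfolding c_def using EF_bl by (rule onorm_pos_le)

lemma EF_bound: "norm (E (F x)) \<le> c * norm x"
  using onorm[OF EF_bl, of x] unfolding c_def by simp

lemma FE_bound: "norm (F (E x)) \<le> c * norm x"
proof -
  let ?y = "F (E x)"
  have "(norm ?y)\<^sup>2 = inner ?y ?y" by (simp add: power2_norm_eq_inner)
  also have "\<dots> = inner (E (F ?y)) x"
    using proj_sa[OF pF, of "E x" ?y] proj_sa[OF pE, of x "F ?y"] by (simp add: inner_commute)
  also have "\<dots> \<le> norm (E (F ?y)) * norm x" by (rule norm_cauchy_schwarz)
  also have "\<dots> \<le> c * norm ?y * norm x" using EF_bound[of ?y] by (simp add: mult_right_mono)
  finally have "norm ?y * norm ?y \<le> norm ?y * (c * norm x)" by (simp add: power2_eq_square algebra_simps)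
  then show ?thesis
    by (cases "norm ?y = 0") (use c0 in auto)
qed

lemma F_on_EH: "\<xi> \<in> range E \<Longrightarrow> norm (F \<xi>) \<le> c * norm \<xi>"
  using FE_bound[of \<xi>] proj_range_iff[OF pE, of \<xi>] by simp

lemma E_on_FH: "\<beta> \<in> range F \<Longrightarrow> norm (E \<beta>) \<le> c * norm \<beta>"
  using EF_bound[of \<beta>] proj_range_iff[OF pF, of \<beta>] by simp

lemma c_le_k:
  assumes k: "k \<ge> 0" and h: "\<And>\<xi>. \<xi> \<in> range E \<Longrightarrow> norm (F \<xi>) \<le> k * norm \<xi>"
  shows "c \<le> k"
  unfolding c_def
proof (rule onorm_bound[OF k])
  fix x
  let ?\<xi> = "E (F x)"
  have "(norm ?\<xi>)\<^sup>2 = inner ?\<xi> ?\<xi>" by (simp add: power2_norm_eq_inner)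
  also have "\<dots> = inner x (F ?\<xi>)"
    using proj_sa[OF pE, of "F x" ?\<xi>] proj_sa[OF pF, of x ?\<xi>] proj_idem[OF pE, of "F x"] by simp
  also have "\<dots> \<le> norm x * norm (F ?\<xi>)" by (rule norm_cauchy_schwarz)
  also have "\<dots> \<le> norm x * (k * norm ?\<xi>)" using h[of ?\<xi>] by (simp add: mult_left_mono)
  finally have "norm ?\<xi> * norm ?\<xi> \<le> norm ?\<xi> * (k * norm x)" by (simp add: power2_eq_square algebra_simps)
  then show "norm ((E \<circ> F) x) \<le> k * norm x"
    by (cases "norm ?\<xi> = 0") (use k in auto)
qed

lemma pyth_F: "(norm (x - F x))\<^sup>2 = (norm x)\<^sup>2 - (norm (F x))\<^sup>2"
  using proj_pyth[OF pF, of x] by simp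

lemma c_le_M:
  assumes M: "M \<ge> 1" and h: "\<And>\<xi>. \<xi> \<in> range E \<Longrightarrow> norm \<xi> \<le> M * norm (\<xi> - F \<xi>)"
  shows "c \<le> sqrt (1 - 1 / M\<^sup>2)"
proof (rule c_le_k)
  have "1 / M\<^sup>2 \<le> 1" using M by (simp add: field_simps one_le_power)
  then show "0 \<le> sqrt (1 - 1 / M\<^sup>2)" by simp
  fix \<xi> assume x: "\<xi> \<in> range E"
  have "(norm \<xi>)\<^sup>2 \<le> (M * norm (\<xi> - F \<xi>))\<^sup>2" using h[OF x] by (intro power_mono) auto
  also have "\<dots> = M\<^sup>2 * ((norm \<xi>)\<^sup>2 - (norm (F \<xi>))\<^sup>2)" by (simp add: power_mult_distrib pyth_F)
  finally have "(norm (F \<xi>))\<^sup>2 \<le> (1 - 1 / M\<^sup>2) * (norm \<xi>)\<^sup>2" using M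
    by (simp add: field_simps)
  then have "sqrt ((norm (F \<xi>))\<^sup>2) \<le> sqrt ((1 - 1 / M\<^sup>2) * (norm \<xi>)\<^sup>2)" by (rule real_sqrt_le_mono)
  then show "norm (F \<xi>) \<le> sqrt (1 - 1 / M\<^sup>2) * norm \<xi>" by (simp add: real_sqrt_mult)
qed

lemma c_lt1_of_bound:
  assumes h: "\<And>\<xi>. \<xi> \<in> range E \<Longrightarrow> norm \<xi> \<le> M * norm (\<xi> - F \<xi>)"
  shows "c < 1"
proof -
  define M' where "M' = max M 1"
  have M': "M' \<ge> 1" unfolding M'_def by simp
  have "norm \<xi> \<le> M' * norm (\<xi> - F \<xi>)" if "\<xi> \<in> range E" for \<xi>
    by (rule order_trans[OF h[OF that]]) (simp add: M'_def mult_right_mono)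
  then have "c \<le> sqrt (1 - 1 / M'\<^sup>2)" using c_le_M[OF M'] by blast
  also have "\<dots> < 1" using M' by simp
  finally show ?thesis .
qed

end

lemma Cauchy_transfer:
  fixes s :: "nat \<Rightarrow> 'a::metric_space" and x :: "nat \<Rightarrow> 'b::metric_space"
  assumes s: "Cauchy s" and K: "K > 0" and h: "\<And>m n. dist (x m) (x n) \<le> K * dist (s m) (s n)"
  shows "Cauchy x"
proof (rule metric_CauchyI)
  fix e :: real assume e: "e > 0"
  then have "e / K > 0" using K by simp
  then obtain N where N: "\<forall>m\<ge>N. \<forall>n\<ge>N. dist (s m) (s n) < e / K"
    using s unfolding Cauchy_def by blast
  show "\<exists>M. \<forall>m\<ge>M. \<forall>n\<ge>M. dist (x m) (x n) < e"
  proof (intro exI allI impI)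
    fix m n assume "N \<le> m" "N \<le> n"
    then have "dist (s m) (s n) < e / K" using N by blast
    then have "K * dist (s m) (s n) < e" using K by (simp add: field_simps)
    then show "dist (x m) (x n) < e" using h[of m n] by linarith
  qed
qed

context twoproj
begin

definition q where "q = 1 - c\<^sup>2"
definition K where "K = q powr (-1/2)"

lemma q_pos: "c < 1 \<Longrightarrow> q > 0"
  unfolding q_def using c0 by (simp add: abs_square_less_1)

lemma K_pos: "c < 1 \<Longrightarrow> K > 0"
  unfolding K_def using q_pos by simp

lemma IF_le: "norm (x - F x) \<le> norm x"
proof -
  have "(norm (x - F x))\<^sup>2 \<le> (norm x)\<^sup>2" using pyth_F[of x] by simp
  then show ?thesis using power2_le_imp_le norm_ge_zero by blast
qed

lemma lower_EH:
  assumes x: "\<xi> \<in> range E"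
  shows "q * (norm \<xi>)\<^sup>2 \<le> (norm (\<xi> - F \<xi>))\<^sup>2"
proof -
  have "(norm (F \<xi>))\<^sup>2 \<le> (c * norm \<xi>)\<^sup>2" using F_on_EH[OF x] by (intro power_mono) auto
  then show ?thesis unfolding q_def pyth_F by (simp add: power_mult_distrib algebra_simps)
qed

lemma lower_EH':
  assumes "c < 1" "\<xi> \<in> range E"
  shows "norm \<xi> \<le> K * norm (\<xi> - F \<xi>)"
  unfolding K_def using sq_bound[OF q_pos[OF assms(1)] _ _ lower_EH[OF assms(2)]] by simp

lemma E_fix: "\<xi> \<in> range E \<Longrightarrow> E \<xi> = \<xi>" using proj_range_iff[OF pE] by blast
lemma F_fix: "\<xi> \<in> range F \<Longrightarrow> F \<xi> = \<xi>" using proj_range_iff[OF pF] by blast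
lemma J_fix: "\<xi> \<in> range J \<Longrightarrow> J \<xi> = \<xi>" using proj_range_iff[OF pJ] by blast

lemma G_closed:
  assumes c1: "c < 1"
  shows "closed S"
  unfolding closed_sequential_limits
proof (intro allI impI, elim conjE)
  fix s l assume sS: "\<forall>n. s n \<in> S" and sl: "s \<longlonglongrightarrow> l"
  have "\<forall>n. \<exists>a b. s n = E a + F b" using sS unfolding S_def by blast
  then obtain a b where ab: "\<And>n. s n = E (a n) + F (b n)" by metis
  define \<xi> where "\<xi> n = E (a n)" for n
  have \<xi>E: "\<xi> n \<in> range E" for n unfolding \<xi>_def by simp
  have IFs: "(s m - s n) - F (s m - s n) = (\<xi> m - \<xi> n) - F (\<xi> m - \<xi> n)" for m n
    unfolding ab \<xi>_def proj_diff[OF pF] proj_add[OF pF] proj_idem[OF pF] by (simp add: algebra_simps)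
  have "Cauchy \<xi>"
  proof (rule Cauchy_transfer[OF LIMSEQ_imp_Cauchy[OF sl] K_pos[OF c1]])
    fix m n
    have d: "\<xi> m - \<xi> n \<in> range E" using \<xi>E EH_sub subspace_diff by blast
    have "dist (\<xi> m) (\<xi> n) = norm (\<xi> m - \<xi> n)" by (simp add: dist_norm)
    also have "\<dots> \<le> K * norm ((\<xi> m - \<xi> n) - F (\<xi> m - \<xi> n))" by (rule lower_EH'[OF c1 d])
    also have "\<dots> = K * norm ((s m - s n) - F (s m - s n))" by (simp add: IFs)
    also have "\<dots> \<le> K * norm (s m - s n)" using K_pos[OF c1] IF_le by (intro mult_left_mono) auto
    finally show "dist (\<xi> m) (\<xi> n) \<le> K * dist (s m) (s n)" by (simp add: dist_norm)
  qed
  then obtain x where x: "\<xi> \<longlonglongrightarrow> x" using convergent_eq_Cauchy by blast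
  have xE: "x \<in> range E" using closed_sequentially[OF EH_closed \<xi>E x] .
  have lim: "(\<lambda>n. s n - \<xi> n) \<longlonglongrightarrow> l - x" using sl x by (intro tendsto_intros)
  have Fn: "\<And>n. s n - \<xi> n \<in> range F" unfolding ab \<xi>_def by simp
  have lxF: "l - x \<in> range F" by (rule closed_sequentially[OF FH_closed Fn lim])
  have "l = E x + F (l - x)" using E_fix[OF xE] F_fix[OF lxF] by simp
  then show "l \<in> S" unfolding S_def by blast
qed

end

lemma norm_diff_Pythagorean:
  fixes a b :: "'a::real_inner"
  assumes "inner a b = 0"
  shows "(norm (a - b))\<^sup>2 = (norm a)\<^sup>2 + (norm b)\<^sup>2"
proof -
  have "orthogonal a (- b)" using assms by (simp add: orthogonal_def)
  from norm_add_Pythagorean[OF this] show ?thesis by simp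
qed

context twoproj
begin

lemma G_S: "c < 1 \<Longrightarrow> range J = S"
  using G_closed rJ closure_closed by metis

lemma compl:
  assumes c1: "c < 1" and vJ: "v \<in> range J" and Ev: "E v = 0"
  shows "q * (norm v)\<^sup>2 \<le> (norm (F v))\<^sup>2"
proof -
  have "v \<in> S" using vJ G_S[OF c1] by simp
  then obtain a b where vab: "v = E a + F b" unfolding S_def by blast
  define \<beta> where "\<beta> = F b"
  have \<beta>F: "\<beta> \<in> range F" unfolding \<beta>_def by simp
  have Eb: "E \<beta> = - E a"
  proof -
    have "E v = E (E a) + E \<beta>" unfolding vab \<beta>_def by (simp add: proj_add[OF pE])
    then show ?thesis using Ev proj_idem[OF pE] by (simp add: eq_neg_iff_add_eq_0 add.commute)
  qed
  have vb: "v = \<beta> - E \<beta>" using Eb vab \<beta>_def by simp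
  have qb: "q * (norm \<beta>)\<^sup>2 \<le> (norm v)\<^sup>2"
  proof -
    have "(norm v)\<^sup>2 = (norm \<beta>)\<^sup>2 - (norm (E \<beta>))\<^sup>2" using proj_pyth[OF pE, of \<beta>] vb by simp
    moreover have "(norm (E \<beta>))\<^sup>2 \<le> (c * norm \<beta>)\<^sup>2" using E_on_FH[OF \<beta>F] by (intro power_mono) auto
    ultimately show ?thesis unfolding q_def by (simp add: power_mult_distrib algebra_simps)
  qed
  have "(norm v)\<^sup>2 = inner (\<beta> - E \<beta>) v" using vb by (simp add: power2_norm_eq_inner)
  also have "\<dots> = inner \<beta> v - inner \<beta> (E v)" using proj_sa[OF pE] by (simp add: inner_diff)
  also have "\<dots> = inner (F \<beta>) v" using Ev F_fix[OF \<beta>F] by simp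
  also have "\<dots> = inner \<beta> (F v)" using proj_sa[OF pF] by simp
  also have "\<dots> \<le> norm \<beta> * norm (F v)" by (rule norm_cauchy_schwarz)
  finally have vv: "(norm v)\<^sup>2 \<le> norm \<beta> * norm (F v)" .
  show ?thesis
  proof (cases "v = 0")
    case True then show ?thesis by simp
  next
    case False
    define V where "V = (norm v)\<^sup>2"
    define B where "B = (norm \<beta>)\<^sup>2"
    define W where "W = (norm (F v))\<^sup>2"
    have V0: "V > 0" using False unfolding V_def by simp
    have W0: "W \<ge> 0" unfolding W_def by simp
    have q0: "q > 0" using q_pos[OF c1] .
    have "V\<^sup>2 \<le> (norm \<beta> * norm (F v))\<^sup>2" unfolding V_def using vv by (intro power_mono) auto
    then have 1: "V\<^sup>2 \<le> B * W" unfolding B_def W_def by (simp add: power_mult_distrib)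
    have 2: "q * B \<le> V" using qb unfolding B_def V_def .
    have "q * V\<^sup>2 \<le> q * (B * W)" using 1 q0 by (intro mult_left_mono) auto
    also have "\<dots> = (q * B) * W" by simp
    also have "\<dots> \<le> V * W" using 2 W0 by (intro mult_right_mono) auto
    finally have "V * (q * V) \<le> V * W" by (simp add: power2_eq_square algebra_simps)
    then have "q * V \<le> W" using V0 by simp
    then show ?thesis unfolding V_def W_def .
  qed
qed

lemma A_decomp: "(norm (E x - F x))\<^sup>2 = (norm (E x - F (E x)))\<^sup>2 + (norm (F (x - E x)))\<^sup>2"
proof -
  have "E x - F x = (E x - F (E x)) - F (x - E x)" by (simp add: proj_diff[OF pF])
  moreover have "inner (E x - F (E x)) (F (x - E x)) = 0" by (rule proj_orth[OF pF])
  ultimately show ?thesis using norm_diff_Pythagorean by metis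
qed

lemma A_le: "norm (E x - F x) \<le> norm x"
proof -
  have "(norm (E x - F x))\<^sup>2 = (norm (E x - F (E x)))\<^sup>2 + (norm (F (x - E x)))\<^sup>2" by (rule A_decomp)
  also have "\<dots> \<le> (norm (E x))\<^sup>2 + (norm (x - E x))\<^sup>2"
    using IF_le[of "E x"] proj_norm_le[OF pF, of "x - E x"] by (intro add_mono power_mono) auto
  also have "\<dots> = (norm x)\<^sup>2" using proj_pyth[OF pE, of x] by simp
  finally show ?thesis using power2_le_imp_le norm_ge_zero by blast
qed

lemma G_lower:
  assumes c1: "c < 1" and xJ: "x \<in> range J"
  shows "q * (norm x)\<^sup>2 \<le> (norm (E x - F x))\<^sup>2"
proof -
  have vJ: "x - E x \<in> range J" using xJ EH_JH[of "E x"] JH_sub subspace_diff by blast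
  have Ev: "E (x - E x) = 0" by (simp add: proj_diff[OF pE] proj_idem[OF pE])
  have 1: "q * (norm (E x))\<^sup>2 \<le> (norm (E x - F (E x)))\<^sup>2" by (rule lower_EH) simp
  have 2: "q * (norm (x - E x))\<^sup>2 \<le> (norm (F (x - E x)))\<^sup>2" by (rule compl[OF c1 vJ Ev])
  have "q * (norm x)\<^sup>2 = q * (norm (E x))\<^sup>2 + q * (norm (x - E x))\<^sup>2"
    using proj_pyth[OF pE, of x] by (simp add: algebra_simps)
  also have "\<dots> \<le> (norm (E x - F x))\<^sup>2" using 1 2 A_decomp[of x] by linarith
  finally show ?thesis .
qed

lemma G_lower':
  assumes "c < 1" "x \<in> range J"
  shows "norm x \<le> K * norm (E x - F x)"
  unfolding K_def using sq_bound[OF q_pos[OF assms(1)] _ _ G_lower[OF assms]] by simp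

end

context twoproj
begin

lemma A_bl: "bounded_linear (\<lambda>x. E x - F x)"
  using proj_lin[OF pE] proj_lin[OF pF] by (rule bounded_linear_sub)

lemma A_diff: "(E (x - y) - F (x - y)) = (E x - F x) - (E y - F y)"
  by (simp add: proj_diff[OF pE] proj_diff[OF pF])

lemma A_sa: "inner (E x - F x) y = inner x (E y - F y)"
  using proj_sa[OF pE] proj_sa[OF pF] by (simp add: inner_diff)

lemma A_JH: "x \<in> range J \<Longrightarrow> E x - F x \<in> range J"
  using EH_JH[of "E x"] FH_JH[of "F x"] JH_sub subspace_diff by blast

lemma G_surj2:
  assumes c1: "c < 1" and yJ: "y \<in> range J"
  shows "\<exists>x\<in>range J. E x - F x = y"
proof -
  define A where "A x = E x - F x" for x
  define R where "R = A ` range J"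
  have RJ: "R \<subseteq> range J" unfolding R_def A_def using A_JH by blast
  have Rsub: "subspace R" unfolding subspace_def R_def
  proof (intro conjI ballI allI)
    show "0 \<in> A ` range J" unfolding A_def using JH_sub subspace_0
      by (metis (no_types, lifting) diff_zero image_eqI pE pF proj_zero)
    fix a b assume "a \<in> A ` range J" "b \<in> A ` range J"
    then obtain x y where "x \<in> range J" "y \<in> range J" "a = A x" "b = A y" by blast
    then have "x + y \<in> range J" "a + b = A (x + y)"
      using JH_sub subspace_add[of "range J" x y] unfolding A_def by (auto simp: proj_add[OF pE] proj_add[OF pF])
    then show "a + b \<in> A ` range J" by blast
  next
    fix r a assume "a \<in> A ` range J"
    then obtain x where "x \<in> range J" "a = A x" by blast
    then have "r *\<^sub>R x \<in> range J" "r *\<^sub>R a = A (r *\<^sub>R x)"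
      using subspace_scale[OF JH_sub, of x r] unfolding A_def by (simp_all add: proj_scale[OF pE] proj_scale[OF pF] scaleR_diff_right)
    then show "r *\<^sub>R a \<in> A ` range J" by blast
  qed
  have Rclosed: "closed R"
    unfolding closed_sequential_limits
  proof (intro allI impI, elim conjE)
    fix s l assume sR: "\<forall>n. s n \<in> R" and sl: "s \<longlonglongrightarrow> l"
    have "\<forall>n. \<exists>x. x \<in> range J \<and> s n = A x" using sR unfolding R_def by blast
    then obtain x where xJ: "\<And>n. x n \<in> range J" and sx: "\<And>n. s n = A (x n)" by metis
    have "Cauchy x"
    proof (rule Cauchy_transfer[OF LIMSEQ_imp_Cauchy[OF sl] K_pos[OF c1]])
      fix m n
      have d: "x m - x n \<in> range J" using xJ JH_sub subspace_diff by blast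
      have "dist (x m) (x n) = norm (x m - x n)" by (simp add: dist_norm)
      also have "\<dots> \<le> K * norm (E (x m - x n) - F (x m - x n))" by (rule G_lower'[OF c1 d])
      also have "\<dots> = K * dist (s m) (s n)" unfolding sx A_def A_diff by (simp add: dist_norm)
      finally show "dist (x m) (x n) \<le> K * dist (s m) (s n)" .
    qed
    then obtain x0 where x0: "x \<longlonglongrightarrow> x0" using convergent_eq_Cauchy by blast
    have x0J: "x0 \<in> range J" using closed_sequentially[OF JH_closed xJ x0] .
    have "(\<lambda>n. A (x n)) \<longlonglongrightarrow> A x0" unfolding A_def using bounded_linear.tendsto[OF A_bl x0] .
    moreover have "s = (\<lambda>n. A (x n))" using sx by (simp add: fun_eq_iff)
    ultimately have "s \<longlonglongrightarrow> A x0" by simp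
    then have "l = A x0" using sl LIMSEQ_unique by blast
    then show "l \<in> R" unfolding R_def using x0J by blast
  qed
  define P where "P = proj_onto R"
  have pP: "is_projection P" and rP: "range P = R" using proj_onto[OF Rsub Rclosed] unfolding P_def by auto
  define r where "r = y - P y"
  have rJ: "r \<in> range J" unfolding r_def using yJ RJ rP JH_sub subspace_diff by blast
  have "A (A r) \<in> R" unfolding R_def using rJ A_JH unfolding A_def by blast
  then have "inner r (A (A r)) = 0" unfolding r_def using proj_orth_range[OF pP] rP by blast
  then have "inner (A r) (A r) = 0" unfolding A_def using A_sa by metis
  then have "A r = 0" by simp
  then have "norm r \<le> 0" using G_lower'[OF c1 rJ] unfolding A_def by simp
  then have "y = P y" unfolding r_def by simp
  moreover have "P y \<in> R" using rP by blast
  ultimately have "y \<in> R" by simp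
  then show ?thesis unfolding R_def A_def by blast
qed

end

context twoproj
begin

lemma Y_E_lower:
  assumes surj: "\<And>z. z \<in> Y \<Longrightarrow> \<exists>\<xi>\<in>range E. \<xi> - F \<xi> = z"
  shows "\<exists>M>0. \<forall>z\<in>Y. norm z \<le> M * norm (E z)"
proof -
  define A where "A n = {y\<in>Y. \<forall>z\<in>Y. \<bar>inner y z\<bar> \<le> real n * norm (E z)}" for n :: nat
  have Acl: "closedin (top_of_set Y) (A n)" for n
  proof -
    have "A n = Y \<inter> (\<Inter>z\<in>Y. {y. \<bar>inner y z\<bar> \<le> real n * norm (E z)})" unfolding A_def by blast
    moreover have "closed (\<Inter>z\<in>Y. {y. \<bar>inner y z\<bar> \<le> real n * norm (E z)})"
    proof (rule closed_INT, rule ballI)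
      fix z :: 'a
      have "continuous_on UNIV (\<lambda>y. \<bar>inner y z\<bar>)"
        by (intro continuous_on_rabs continuous_on_inner continuous_on_id continuous_on_const)
      then show "closed {y. \<bar>inner y z\<bar> \<le> real n * norm (E z)}"
        by (rule closed_Collect_le) (rule continuous_on_const)
    qed
    ultimately show ?thesis by (simp add: closedin_closed_Int)
  qed
  have cover: "\<Union>(range A) = Y"
  proof
    show "\<Union>(range A) \<subseteq> Y" unfolding A_def by blast
    show "Y \<subseteq> \<Union>(range A)"
    proof
      fix y assume yY: "y \<in> Y"
      obtain \<xi> where \<xi>: "\<xi> \<in> range E" "\<xi> - F \<xi> = y" using surj[OF yY] by blast
      define n where "n = nat \<lceil>norm \<xi>\<rceil>"
      have nle: "norm \<xi> \<le> real n" unfolding n_def by (simp add: real_nat_ceiling_ge)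
      have hz: "\<bar>inner y z\<bar> \<le> real n * norm (E z)" if zY: "z \<in> Y" for z
      proof -
        have Fz: "F z = 0" using zY Y_iff by blast
        have "inner y z = inner \<xi> z - inner \<xi> (F z)" using \<xi>(2)[symmetric] proj_sa[OF pF] by (simp add: inner_diff)
        also have "\<dots> = inner (E \<xi>) z" using Fz E_fix[OF \<xi>(1)] by simp
        also have "\<dots> = inner \<xi> (E z)" using proj_sa[OF pE] by simp
        finally have yz: "inner y z = inner \<xi> (E z)" .
        have "\<bar>inner \<xi> (E z)\<bar> \<le> norm \<xi> * norm (E z)" by (rule Cauchy_Schwarz_ineq2)
        then have "\<bar>inner y z\<bar> \<le> norm \<xi> * norm (E z)" by (simp only: yz)
        also have "\<dots> \<le> real n * norm (E z)" using nle by (intro mult_right_mono) auto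
        finally show ?thesis .
      qed
      have "y \<in> A n" unfolding A_def using yY hz by simp
      then show "y \<in> \<Union>(range A)" by blast
    qed
  qed
  have "closedin euclidean Y" using Y_closed closed_closedin by blast
  then have cms: "completely_metrizable_space (top_of_set Y)"
    by (rule completely_metrizable_space_closedin[OF completely_metrizable_space_euclidean])
  have "\<exists>n. (top_of_set Y) interior_of (A n) \<noteq> {}"
  proof (rule ccontr)
    assume asm: "\<nexists>n. top_of_set Y interior_of A n \<noteq> {}"
    have "(top_of_set Y) interior_of \<Union>(range A) = {}"
    proof (rule Baire_category_alt)
      show "completely_metrizable_space (top_of_set Y) \<or>
        locally_compact_space (top_of_set Y) \<and> regular_space (top_of_set Y)" using cms by (rule disjI1)
      show "countable (range A)" by simp
      fix T assume "T \<in> range A"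
      then obtain m where "T = A m" by blast
      then show "closedin (top_of_set Y) T \<and> (top_of_set Y) interior_of T = {}" using Acl asm by simp
    qed
    then have "(top_of_set Y) interior_of (topspace (top_of_set Y)) = {}" using cover by simp
    moreover have "topspace (top_of_set Y) = Y" by simp
    ultimately have "(top_of_set Y) interior_of Y = {}" by simp
    moreover have "(top_of_set Y) interior_of Y = Y"
      using interior_of_topspace[of "top_of_set Y"] by simp
    ultimately have "Y = {}" by simp
    moreover have "0 \<in> Y" using Y_sub subspace_0 by blast
    ultimately show False by simp
  qed
  then obtain n y0 where "y0 \<in> (top_of_set Y) interior_of (A n)" by blast
  then obtain T where T: "openin (top_of_set Y) T" "y0 \<in> T" "T \<subseteq> A n"
    unfolding interior_of_def mem_Collect_eq by blast
  from T(1) obtain U where U: "open U" "T = Y \<inter> U" unfolding openin_open by blast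
  have y0U: "y0 \<in> U" using T(2) U(2) by blast
  obtain r where r: "r > 0" "ball y0 r \<subseteq> U" using U(1) y0U unfolding open_contains_ball by blast
  have inA: "w \<in> A n" if wY: "w \<in> Y" and wd: "dist y0 w < r" for w
  proof -
    have "w \<in> ball y0 r" using wd by simp
    then have "w \<in> U" using r(2) by blast
    then have "w \<in> T" using U(2) wY by blast
    then show ?thesis using T(3) by blast
  qed
  have y0Y: "y0 \<in> Y" using T(2) U(2) by blast
  have y0A: "y0 \<in> A n" using inA[OF y0Y] r(1) by simp
  define M where "M = 4 * real n / r + 1"
  have M0: "M > 0" unfolding M_def using r by (simp add: add_nonneg_pos)
  have "norm z \<le> M * norm (E z)" if zY: "z \<in> Y" for z
  proof (cases "z = 0")
    case True then show ?thesis using proj_zero[OF pE] by simp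
  next
    case False
    define t where "t = r / (2 * norm z)"
    have t0: "t > 0" unfolding t_def using r False by simp
    define w where "w = y0 + t *\<^sub>R z"
    have wY: "w \<in> Y" unfolding w_def using y0Y zY Y_sub by (simp add: subspace_add subspace_scale)
    have "dist y0 w = t * norm z" unfolding w_def dist_norm using t0 by simp
    also have "\<dots> = r / 2" unfolding t_def using False by simp
    finally have "dist y0 w < r" using r by simp
    then have wA: "w \<in> A n" using inA wY by blast
    have 1: "\<bar>inner w z\<bar> \<le> real n * norm (E z)" using wA zY unfolding A_def by blast
    have 2: "\<bar>inner y0 z\<bar> \<le> real n * norm (E z)" using y0A zY unfolding A_def by blast
    have "inner w z - inner y0 z = t * (norm z)\<^sup>2" unfolding w_def
      by (simp add: inner_add_left power2_norm_eq_inner)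
    also have "\<dots> = r / 2 * norm z" unfolding t_def using False by (simp add: power2_eq_square)
    finally have "r / 2 * norm z \<le> 2 * real n * norm (E z)" using 1 2 by linarith
    then have "norm z \<le> (4 * real n / r) * norm (E z)" using r by (simp add: field_simps)
    also have "\<dots> \<le> M * norm (E z)" unfolding M_def by (intro mult_right_mono) auto
    finally show ?thesis .
  qed
  then show ?thesis using M0 by blast
qed

lemma C1_G:
  assumes meet: "\<And>x. x \<in> range E \<Longrightarrow> x \<in> range F \<Longrightarrow> x = 0"
    and surj: "\<And>z. z \<in> Y \<Longrightarrow> \<exists>\<xi>\<in>range E. \<xi> - F \<xi> = z"
  shows "c < 1"
proof -
  obtain M where M0: "M > 0" and MY: "\<And>z. z \<in> Y \<Longrightarrow> norm z \<le> M * norm (E z)"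
    using Y_E_lower[OF surj] by blast
  define EY where "EY = E ` Y"
  have EYsub: "subspace EY" unfolding subspace_def EY_def
  proof (intro conjI ballI allI)
    have "0 \<in> Y" using Y_sub by (rule subspace_0)
    then have "E 0 \<in> E ` Y" by (rule imageI)
    then show "0 \<in> E ` Y" using proj_zero[OF pE] by simp
    fix a b assume "a \<in> E ` Y" "b \<in> E ` Y"
    then obtain x y where xy: "x \<in> Y" "y \<in> Y" "a = E x" "b = E y" by blast
    have "x + y \<in> Y" using subspace_add[OF Y_sub xy(1,2)] .
    moreover have "a + b = E (x + y)" using xy by (simp add: proj_add[OF pE])
    ultimately show "a + b \<in> E ` Y" by blast
  next
    fix s a assume "a \<in> E ` Y"
    then obtain x where x: "x \<in> Y" "a = E x" by blast
    have "s *\<^sub>R x \<in> Y" using subspace_scale[OF Y_sub x(1)] .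
    moreover have "s *\<^sub>R a = E (s *\<^sub>R x)" using x by (simp add: proj_scale[OF pE])
    ultimately show "s *\<^sub>R a \<in> E ` Y" by blast
  qed
  define D where "D = closure EY"
  have DE: "D \<subseteq> range E" unfolding D_def EY_def
    by (rule closure_minimal[OF _ EH_closed]) auto
  define P where "P = proj_onto D"
  have pP: "is_projection P" and rP: "range P = D"
    using proj_onto[OF subspace_closure'[OF EYsub] closed_closure] unfolding P_def D_def by auto
  have inD: "\<xi> \<in> D" if \<xi>E: "\<xi> \<in> range E" for \<xi>
  proof -
    define r where "r = \<xi> - P \<xi>"
    have "P \<xi> \<in> range P" by (rule rangeI)
    then have PD: "P \<xi> \<in> D" by (simp only: rP)
    have "P \<xi> \<in> range E" by (rule subsetD[OF DE PD])
    then have rE: "r \<in> range E" unfolding r_def by (rule subspace_diff[OF EH_sub \<xi>E])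
    have orth: "inner r z = 0" if zY: "z \<in> Y" for z
    proof -
      have "E z \<in> E ` Y" using zY by (rule imageI)
      then have "E z \<in> D" unfolding D_def EY_def by (rule subsetD[OF closure_subset])
      then have "E z \<in> range P" using rP by simp
      then have "inner r (E z) = 0" unfolding r_def by (rule proj_orth_range[OF pP])
      then show ?thesis using proj_sa[OF pE, of r z] E_fix[OF rE] by simp
    qed
    have rJ: "J r = r" using J_fix[OF EH_JH[OF rE]] .
    have "r - F r \<in> Y" unfolding Y_iff
      using rJ JF[of r] by (simp add: proj_diff[OF pJ] proj_diff[OF pF] proj_idem[OF pF])
    then have 1: "inner r (r - F r) = 0" by (rule orth)
    have "inner (r - F r) (r - F r) = inner r (r - F r) - inner (F r) (r - F r)" by (simp add: inner_diff_left)
    also have "inner (F r) (r - F r) = 0" using proj_orth[OF pF, of r r] by (simp add: inner_commute)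
    finally have "inner (r - F r) (r - F r) = 0" using 1 by simp
    then have "r = F r" by simp
    then have "r \<in> range F" by (metis rangeI)
    then have "r = 0" using meet rE by blast
    then show ?thesis using PD unfolding r_def by simp
  qed
  have bound: "norm \<xi> \<le> M * norm (\<xi> - F \<xi>)" if \<xi>E: "\<xi> \<in> range E" for \<xi>
  proof -
    have cl: "\<xi> \<in> closure EY" using inD[OF \<xi>E] unfolding D_def .
    have key: "(norm \<xi>)\<^sup>2 \<le> M * norm (\<xi> - F \<xi>) * norm \<xi> + e * (M * norm (\<xi> - F \<xi>) + norm \<xi>)"
      if e: "e > 0" for e
    proof -
      obtain v where v: "v \<in> EY" "dist v \<xi> < e" using cl e unfolding closure_approachable by blast
      then obtain z where zY: "z \<in> Y" and vz: "v = E z" unfolding EY_def by blast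
      have Fz: "F z = 0" using zY Y_iff by blast
      have "inner \<xi> (E z) = inner (E \<xi>) z" using proj_sa[OF pE] by simp
      also have "\<dots> = inner (\<xi> - F \<xi>) z" using E_fix[OF \<xi>E] proj_sa[OF pF, of \<xi> z] Fz by (simp add: inner_diff_left)
      also have "\<dots> \<le> norm (\<xi> - F \<xi>) * norm z" by (rule norm_cauchy_schwarz)
      also have "\<dots> \<le> norm (\<xi> - F \<xi>) * (M * norm (E z))" using MY[OF zY] by (simp add: mult_left_mono)
      also have "\<dots> \<le> norm (\<xi> - F \<xi>) * (M * (norm \<xi> + e))"
      proof -
        have "norm (E z) \<le> norm \<xi> + e" using v vz norm_triangle_ineq2[of "E z" \<xi>]
          by (simp add: dist_norm)
        then show ?thesis using M0 by (intro mult_left_mono) auto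
      qed
      finally have 1: "inner \<xi> (E z) \<le> M * norm (\<xi> - F \<xi>) * norm \<xi> + e * (M * norm (\<xi> - F \<xi>))"
        by (simp add: algebra_simps)
      have "inner \<xi> (\<xi> - E z) \<le> norm \<xi> * norm (\<xi> - E z)" by (rule norm_cauchy_schwarz)
      also have "\<dots> \<le> norm \<xi> * e" using v vz by (intro mult_left_mono) (auto simp: dist_norm norm_minus_commute)
      finally have 2: "inner \<xi> (\<xi> - E z) \<le> e * norm \<xi>" by (simp only: mult.commute)
      have "(norm \<xi>)\<^sup>2 = inner \<xi> (E z) + inner \<xi> (\<xi> - E z)"
        by (simp add: power2_norm_eq_inner inner_diff_right)
      also have "\<dots> \<le> M * norm (\<xi> - F \<xi>) * norm \<xi> + e * (M * norm (\<xi> - F \<xi>) + norm \<xi>)"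
        using 1 2 by (simp add: algebra_simps)
      finally show ?thesis .
    qed
    have "(norm \<xi>)\<^sup>2 \<le> M * norm (\<xi> - F \<xi>) * norm \<xi>"
      by (rule le_eps_lemma[OF _ key]) (use M0 in simp)
    then have "norm \<xi> * norm \<xi> \<le> norm \<xi> * (M * norm (\<xi> - F \<xi>))"
      by (simp add: power2_eq_square algebra_simps)
    then show ?thesis by (cases "norm \<xi> = 0") (use M0 in auto)
  qed
  show ?thesis by (rule c_lt1_of_bound[OF bound])
qed

end

context twoproj
begin

lemma opnorm_formula:
  assumes c1: "c < 1"
    and ne: "\<exists>y\<in>D. y \<noteq> 0"
    and up: "\<And>y. y \<in> D \<Longrightarrow> norm (h y) \<le> K * norm y"
    and ge1: "\<And>y. y \<in> D \<Longrightarrow> y \<noteq> 0 \<Longrightarrow> norm y \<le> norm (h y)"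
    and gen: "\<And>\<xi>. \<xi> \<in> range E \<Longrightarrow> \<xi> \<noteq> 0 \<Longrightarrow>
                 \<exists>y\<in>D. y \<noteq> 0 \<and> norm (h y) = norm \<xi> \<and> norm y = norm (\<xi> - F \<xi>)"
  shows "opnorm_on D h = K"
proof -
  define f where "f y = norm (h y) / norm y" for y
  define s where "s = opnorm_on D h"
  have s_def': "s = (SUP y\<in>D - {0}. f y)" unfolding s_def opnorm_on_def f_def ..
  have ne': "D - {0} \<noteq> {}" using ne by blast
  have K0: "K > 0" using K_pos[OF c1] .
  have fK: "f y \<le> K" if "y \<in> D - {0}" for y
    unfolding f_def using that up[of y] by (simp add: pos_divide_le_eq)
  have bdd: "bdd_above (f ` (D - {0}))" using fK by (intro bdd_aboveI2) auto
  have sK: "s \<le> K" unfolding s_def' using ne' fK by (intro cSUP_least) auto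
  have fs: "f y \<le> s" if "y \<in> D - {0}" for y
    unfolding s_def' using bdd that by (rule cSUP_upper2) simp
  obtain y0 where y0: "y0 \<in> D" "y0 \<noteq> 0" using ne by blast
  have "1 \<le> f y0" unfolding f_def using ge1[OF y0] y0(2) by simp
  then have s1: "s \<ge> 1" using fs[of y0] y0 by simp
  have bound: "norm \<xi> \<le> s * norm (\<xi> - F \<xi>)" if xE: "\<xi> \<in> range E" for \<xi>
  proof (cases "\<xi> = 0")
    case True then show ?thesis using proj_zero[OF pF] by simp
  next
    case False
    obtain y where y: "y \<in> D" "y \<noteq> 0" "norm (h y) = norm \<xi>" "norm y = norm (\<xi> - F \<xi>)"
      using gen[OF xE False] by blast
    have "f y \<le> s" using fs y by blast
    then have "norm \<xi> / norm (\<xi> - F \<xi>) \<le> s" unfolding f_def using y by simp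
    moreover have "norm y > 0" using y(2) by simp
    then have "norm (\<xi> - F \<xi>) > 0" using y(4) by simp
    ultimately show ?thesis by (simp add: pos_divide_le_eq mult.commute)
  qed
  have cs: "c \<le> sqrt (1 - 1 / s\<^sup>2)" by (rule c_le_M[OF s1 bound])
  have s2: "1 / s\<^sup>2 \<le> 1" using s1 by (simp add: field_simps one_le_power)
  have "c\<^sup>2 \<le> (sqrt (1 - 1 / s\<^sup>2))\<^sup>2" using cs c0 by (intro power_mono) auto
  also have "\<dots> = 1 - 1 / s\<^sup>2" using s2 by simp
  finally have "1 / s\<^sup>2 \<le> q" unfolding q_def by simp
  then have "1 \<le> q * s\<^sup>2" using s1 by (simp add: field_simps)
  then have "1 \<le> (sqrt q * s)\<^sup>2" using q_pos[OF c1] by (simp add: power_mult_distrib)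
  then have "(1::real)\<^sup>2 \<le> (sqrt q * s)\<^sup>2" by simp
  moreover have "0 \<le> sqrt q * s" using s1 q_pos[OF c1] by simp
  ultimately have "1 \<le> sqrt q * s" by (rule power2_le_imp_le)
  then have "1 / sqrt q \<le> s" using q_pos[OF c1] by (simp add: field_simps)
  then have "K \<le> s" unfolding K_def using powr_mhalf[OF q_pos[OF c1]] by simp
  then show ?thesis using sK unfolding s_def by simp
qed

end

lemma zero_proj: "is_projection (\<lambda>_::'a::real_inner. 0)"
  unfolding is_projection_def by (simp add: bounded_linear_zero)

context twoproj
begin

lemma meet_iff: "proj_meet E F = (\<lambda>_. 0) \<longleftrightarrow> (\<forall>x. x \<in> range E \<longrightarrow> x \<in> range F \<longrightarrow> x = 0)"
proof -
  have sub: "subspace (range E \<inter> range F)" using EH_sub FH_sub by (rule subspace_inter)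
  have cl: "closed (range E \<inter> range F)" using EH_closed FH_closed by (rule closed_Int)
  have pM: "is_projection (proj_meet E F)" and rM: "range (proj_meet E F) = range E \<inter> range F"
    using proj_onto[OF sub cl] unfolding proj_meet_def by auto
  show ?thesis
  proof
    assume "proj_meet E F = (\<lambda>_. 0)"
    then have "range E \<inter> range F = {0}" using rM by auto
    then show "\<forall>x. x \<in> range E \<longrightarrow> x \<in> range F \<longrightarrow> x = 0" by blast
  next
    assume h: "\<forall>x. x \<in> range E \<longrightarrow> x \<in> range F \<longrightarrow> x = 0"
    have "0 \<in> range E" "0 \<in> range F" using subspace_0[OF EH_sub] subspace_0[OF FH_sub] .
    then have "range E \<inter> range F = {0}" using h by blast
    then have "range (proj_meet E F) = range (\<lambda>_::'a. 0)" using rM by auto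
    then show "proj_meet E F = (\<lambda>_. 0)" using proj_unique[OF pM zero_proj] by blast
  qed
qed

lemma surjY:
  assumes JS: "range J = S" and zY: "z \<in> Y"
  shows "\<exists>\<xi>\<in>range E. \<xi> - F \<xi> = z"
proof -
  have Fz: "F z = 0" and Jz: "J z = z" using zY Y_iff by auto
  have "J z \<in> range J" by (rule rangeI)
  then have "z \<in> range J" using Jz by simp
  then have "z \<in> S" using JS by simp
  then obtain a b where zab: "z = E a + F b" unfolding S_def by blast
  have "z - F z = E a - F (E a)" unfolding zab by (simp add: proj_add[OF pF] proj_idem[OF pF])
  then have "E a - F (E a) = z" using Fz by simp
  then show ?thesis by blast
qed

lemma L_C1:
  "(proj_meet E F = (\<lambda>_. 0) \<and> range J = {\<xi> + \<beta> | \<xi> \<beta>. \<xi> \<in> range E \<and> \<beta> \<in> range F}) \<longleftrightarrow> c < 1"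
proof
  assume "proj_meet E F = (\<lambda>_. 0) \<and> range J = {\<xi> + \<beta> | \<xi> \<beta>. \<xi> \<in> range E \<and> \<beta> \<in> range F}"
  then have meet: "\<And>x. x \<in> range E \<Longrightarrow> x \<in> range F \<Longrightarrow> x = 0" and JS: "range J = S"
    using meet_iff S_alt by auto
  show "c < 1" using C1_G[OF meet surjY[OF JS]] by blast
next
  assume c1: "c < 1"
  have "x = 0" if "x \<in> range E" "x \<in> range F" for x
  proof -
    have "norm x \<le> c * norm x" using F_on_EH[OF that(1)] F_fix[OF that(2)] by simp
    then have "(1 - c) * norm x \<le> 0" by (simp add: algebra_simps)
    then have "norm x \<le> 0" using c1 by (simp add: mult_le_0_iff)
    then show ?thesis by simp
  qed
  then have "proj_meet E F = (\<lambda>_. 0)" using meet_iff by blast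
  moreover have "range J = {\<xi> + \<beta> | \<xi> \<beta>. \<xi> \<in> range E \<and> \<beta> \<in> range F}"
    using G_S[OF c1] S_alt by simp
  ultimately show "proj_meet E F = (\<lambda>_. 0) \<and> range J = {\<xi> + \<beta> | \<xi> \<beta>. \<xi> \<in> range E \<and> \<beta> \<in> range F}" ..
qed

lemma inj_A: "c < 1 \<Longrightarrow> inj_on (\<lambda>x. E x - F x) (range J)"
proof (rule inj_onI)
  fix x y assume c1: "c < 1" and x: "x \<in> range J" and y: "y \<in> range J" and eq: "E x - F x = E y - F y"
  have d: "x - y \<in> range J" using subspace_diff[OF JH_sub x y] .
  have "norm (x - y) \<le> K * norm (E (x - y) - F (x - y))" by (rule G_lower'[OF c1 d])
  also have "E (x - y) - F (x - y) = 0" using eq by (simp add: A_diff)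
  finally show "x = y" by simp
qed

lemma T_EH: assumes x: "\<xi> \<in> range E" shows "J (E \<xi>) - F (E \<xi>) = \<xi> - F \<xi>"
proof -
  have "E \<xi> = \<xi>" by (rule E_fix[OF x])
  moreover have "J \<xi> = \<xi>" by (rule J_fix[OF EH_JH[OF x]])
  ultimately show ?thesis by simp
qed

lemma inj_T: "c < 1 \<Longrightarrow> inj_on (\<lambda>x. J (E x) - F (E x)) (range E)"
proof (rule inj_onI)
  fix x y assume c1: "c < 1" and x: "x \<in> range E" and y: "y \<in> range E"
    and eq: "J (E x) - F (E x) = J (E y) - F (E y)"
  have d: "x - y \<in> range E" using subspace_diff[OF EH_sub x y] .
  have "norm (x - y) \<le> K * norm ((x - y) - F (x - y))" by (rule lower_EH'[OF c1 d])
  also have "(x - y) - F (x - y) = 0"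
  proof -
    have "x - F x = y - F y" using eq T_EH[OF x] T_EH[OF y] by simp
    then show ?thesis by (simp add: proj_diff[OF pF] algebra_simps)
  qed
  finally show "x = y" by simp
qed

lemma L_C2: "invertible_between (\<lambda>x. E x - F x) (range J) (range J) \<longleftrightarrow> c < 1"
proof
  assume h: "invertible_between (\<lambda>x. E x - F x) (range J) (range J)"
  then have bij: "bij_betw (\<lambda>x. E x - F x) (range J) (range J)"
    and "\<exists>C. \<forall>y\<in>range J. norm (inv_into (range J) (\<lambda>x. E x - F x) y) \<le> C * norm y"
    unfolding invertible_between_def by auto
  then obtain C where C: "\<And>y. y \<in> range J \<Longrightarrow> norm (inv_into (range J) (\<lambda>x. E x - F x) y) \<le> C * norm y"
    by blast
  have inj: "inj_on (\<lambda>x. E x - F x) (range J)" using bij bij_betw_def by blast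
  have "norm \<xi> \<le> C * norm (\<xi> - F \<xi>)" if xE: "\<xi> \<in> range E" for \<xi>
  proof -
    have xJ: "\<xi> \<in> range J" using EH_JH[OF xE] .
    have eq: "E \<xi> - F \<xi> = \<xi> - F \<xi>" using E_fix[OF xE] by simp
    have "inv_into (range J) (\<lambda>x. E x - F x) (E \<xi> - F \<xi>) = \<xi>" using inv_into_f_f[OF inj xJ] by simp
    then show ?thesis using C[OF A_JH[OF xJ]] eq by simp
  qed
  then show "c < 1" by (rule c_lt1_of_bound)
next
  assume c1: "c < 1"
  have img: "(\<lambda>x. E x - F x) ` range J = range J"
  proof
    show "(\<lambda>x. E x - F x) ` range J \<subseteq> range J" using A_JH by blast
    show "range J \<subseteq> (\<lambda>x. E x - F x) ` range J"
    proof
      fix y assume "y \<in> range J"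
      then obtain x where "x \<in> range J" "E x - F x = y" using G_surj2[OF c1] by blast
      then show "y \<in> (\<lambda>x. E x - F x) ` range J" by blast
    qed
  qed
  have bij: "bij_betw (\<lambda>x. E x - F x) (range J) (range J)"
    unfolding bij_betw_def using inj_A[OF c1] img by blast
  have "norm (inv_into (range J) (\<lambda>x. E x - F x) y) \<le> K * norm y" if yJ: "y \<in> range J" for y
  proof -
    let ?x = "inv_into (range J) (\<lambda>x. E x - F x) y"
    have yi: "y \<in> (\<lambda>x. E x - F x) ` range J" using img yJ by simp
    have xJ: "?x \<in> range J" using inv_into_into[OF yi] .
    have "E ?x - F ?x = y" using f_inv_into_f[OF yi] .
    then show ?thesis using G_lower'[OF c1 xJ] by simp
  qed
  then show "invertible_between (\<lambda>x. E x - F x) (range J) (range J)"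
    unfolding invertible_between_def using bij by blast
qed

lemma L_C3: "invertible_between (\<lambda>x. J (E x) - F (E x)) (range E) (range (\<lambda>x. J x - F x)) \<longleftrightarrow> c < 1"
proof -
  let ?T = "\<lambda>x. J (E x) - F (E x)"
  have YY: "range (\<lambda>x. J x - F x) = Y" unfolding Y_def ..
  show ?thesis unfolding YY
  proof
    assume h: "invertible_between ?T (range E) Y"
    then have bij: "bij_betw ?T (range E) Y"
      and "\<exists>C. \<forall>y\<in>Y. norm (inv_into (range E) ?T y) \<le> C * norm y"
      unfolding invertible_between_def by auto
    then obtain C where C: "\<And>y. y \<in> Y \<Longrightarrow> norm (inv_into (range E) ?T y) \<le> C * norm y"
      by blast
    have inj: "inj_on ?T (range E)" using bij bij_betw_def by blast
    have "norm \<xi> \<le> C * norm (\<xi> - F \<xi>)" if xE: "\<xi> \<in> range E" for \<xi>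
    proof -
      have TY: "?T \<xi> \<in> Y" unfolding Y_def by simp
      have "inv_into (range E) ?T (?T \<xi>) = \<xi>" using inv_into_f_f[OF inj xE] .
      then show ?thesis using C[OF TY] T_EH[OF xE] by simp
    qed
    then show "c < 1" by (rule c_lt1_of_bound)
  next
    assume c1: "c < 1"
    have img: "?T ` range E = Y"
    proof
      show "?T ` range E \<subseteq> Y" unfolding Y_def by blast
      show "Y \<subseteq> ?T ` range E"
      proof
        fix y assume "y \<in> Y"
        then obtain \<xi> where "\<xi> \<in> range E" "\<xi> - F \<xi> = y" using surjY[OF G_S[OF c1]] by blast
        then have "y = ?T \<xi>" "\<xi> \<in> range E" using T_EH by simp_all
        then show "y \<in> ?T ` range E" by (rule image_eqI)
      qed
    qed
    have bij: "bij_betw ?T (range E) Y"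
      unfolding bij_betw_def using inj_T[OF c1] img by blast
    have "norm (inv_into (range E) ?T y) \<le> K * norm y" if yY: "y \<in> Y" for y
    proof -
      let ?x = "inv_into (range E) ?T y"
      have yi: "y \<in> ?T ` range E" using img yY by simp
      have xE: "?x \<in> range E" using inv_into_into[OF yi] .
      have "?T ?x = y" using f_inv_into_f[OF yi] .
      then have "?x - F ?x = y" using T_EH[OF xE] by simp
      then show ?thesis using lower_EH'[OF c1 xE] by simp
    qed
    then show "invertible_between ?T (range E) Y"
      unfolding invertible_between_def using bij by blast
  qed
qed

end

context twoproj
begin

lemma K_eq: "K = (1 - (onorm (E \<circ> F))\<^sup>2) powr (-1/2)"
  unfolding K_def q_def c_def ..

lemma L_N2:
  assumes c1: "c < 1" and J0: "J \<noteq> (\<lambda>_. 0)"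
  shows "opnorm_on (range J) (inv_into (range J) (\<lambda>x. E x - F x)) = K"
proof (rule opnorm_formula[OF c1])
  let ?A = "\<lambda>x. E x - F x"
  have inj: "inj_on ?A (range J)" by (rule inj_A[OF c1])
  have img: "?A ` range J = range J"
    using L_C2 c1 unfolding invertible_between_def bij_betw_def by blast
  obtain x where "J x \<noteq> 0" using J0 by blast
  then show "\<exists>y\<in>range J. y \<noteq> 0" by blast
  fix y assume yJ: "y \<in> range J"
  have yi: "y \<in> ?A ` range J" using img yJ by simp
  have xJ: "inv_into (range J) ?A y \<in> range J" using inv_into_into[OF yi] .
  have Ax: "?A (inv_into (range J) ?A y) = y" using f_inv_into_f[OF yi] .
  show "norm (inv_into (range J) ?A y) \<le> K * norm y"
    using G_lower'[OF c1 xJ] Ax by simp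
  show "norm y \<le> norm (inv_into (range J) ?A y)" if "y \<noteq> 0"
    using A_le[of "inv_into (range J) ?A y"] Ax by simp
next
  let ?A = "\<lambda>x. E x - F x"
  have inj: "inj_on ?A (range J)" by (rule inj_A[OF c1])
  fix \<xi> assume xE: "\<xi> \<in> range E" and x0: "\<xi> \<noteq> 0"
  have xJ: "\<xi> \<in> range J" by (rule EH_JH[OF xE])
  have eq: "?A \<xi> = \<xi> - F \<xi>" using E_fix[OF xE] by simp
  have yJ: "?A \<xi> \<in> range J" by (rule A_JH[OF xJ])
  have "norm \<xi> \<le> K * norm (\<xi> - F \<xi>)" by (rule lower_EH'[OF c1 xE])
  then have y0: "?A \<xi> \<noteq> 0" using x0 eq by auto
  have "inv_into (range J) ?A (?A \<xi>) = \<xi>" by (rule inv_into_f_f[OF inj xJ])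
  then show "\<exists>y\<in>range J. y \<noteq> 0 \<and> norm (inv_into (range J) ?A y) = norm \<xi> \<and> norm y = norm (\<xi> - F \<xi>)"
    using yJ y0 eq by metis
qed

lemma L_N3:
  assumes c1: "c < 1" and E0: "E \<noteq> (\<lambda>_. 0)"
  shows "opnorm_on (range (\<lambda>x. J x - F x)) (inv_into (range E) (\<lambda>x. J (E x) - F (E x))) = K"
  unfolding Y_def[symmetric]
proof (rule opnorm_formula[OF c1])
  let ?T = "\<lambda>x. J (E x) - F (E x)"
  have inj: "inj_on ?T (range E)" by (rule inj_T[OF c1])
  have img: "?T ` range E = Y"
    using L_C3 c1 unfolding invertible_between_def bij_betw_def Y_def by blast
  obtain x where "E x \<noteq> 0" using E0 by blast
  then have xE: "E x \<in> range E" and x0: "E x \<noteq> 0" by auto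
  have "norm (E x) \<le> K * norm (E x - F (E x))" by (rule lower_EH'[OF c1 xE])
  then have nz: "E x - F (E x) \<noteq> 0" using x0 by auto
  have Ty: "?T (E x) = E x - F (E x)" by (rule T_EH[OF xE])
  have "?T (E x) \<in> Y" unfolding Y_def by (rule rangeI)
  then have "E x - F (E x) \<in> Y" using Ty by simp
  with nz show "\<exists>y\<in>Y. y \<noteq> 0" by blast
  fix y assume yY: "y \<in> Y"
  have yi: "y \<in> ?T ` range E" using img yY by simp
  have xE': "inv_into (range E) ?T y \<in> range E" using inv_into_into[OF yi] .
  have Tx: "?T (inv_into (range E) ?T y) = y" using f_inv_into_f[OF yi] .
  then have Tx': "inv_into (range E) ?T y - F (inv_into (range E) ?T y) = y" using T_EH[OF xE'] by simp
  show "norm (inv_into (range E) ?T y) \<le> K * norm y"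
    using lower_EH'[OF c1 xE'] Tx' by simp
  show "norm y \<le> norm (inv_into (range E) ?T y)" if "y \<noteq> 0"
    using IF_le[of "inv_into (range E) ?T y"] Tx' by simp
next
  let ?T = "\<lambda>x. J (E x) - F (E x)"
  have inj: "inj_on ?T (range E)" by (rule inj_T[OF c1])
  fix \<xi> assume xE: "\<xi> \<in> range E" and x0: "\<xi> \<noteq> 0"
  have eq: "?T \<xi> = \<xi> - F \<xi>" by (rule T_EH[OF xE])
  have yY: "?T \<xi> \<in> Y" unfolding Y_def by simp
  have "norm \<xi> \<le> K * norm (\<xi> - F \<xi>)" by (rule lower_EH'[OF c1 xE])
  then have y0: "?T \<xi> \<noteq> 0" using x0 eq by auto
  have "inv_into (range E) ?T (?T \<xi>) = \<xi>" by (rule inv_into_f_f[OF inj xE])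
  then show "\<exists>y\<in>Y. y \<noteq> 0 \<and> norm (inv_into (range E) ?T y) = norm \<xi> \<and> norm y = norm (\<xi> - F \<xi>)"
    using yY y0 eq by metis
qed

end

theorem lemma3p7:
  fixes E F :: "'a::{real_inner, complete_space} \<Rightarrow> 'a"
  assumes "is_projection E" and "is_projection F"
  defines "J \<equiv> proj_join E F"
  defines "C1 \<equiv> proj_meet E F = (\<lambda>_. 0) \<and> range J = {\<xi> + \<beta> | \<xi> \<beta>. \<xi> \<in> range E \<and> \<beta> \<in> range F}"
  defines "C2 \<equiv> invertible_between (\<lambda>x. E x - F x) (range J) (range J)"
  defines "C3 \<equiv> invertible_between (\<lambda>x. J (E x) - F (E x)) (range E) (range (\<lambda>x. J x - F x))"
  shows "(C1 \<longleftrightarrow> C2) \<and> (C2 \<longleftrightarrow> C3)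
    \<and> (C2 \<and> J \<noteq> (\<lambda>_. 0) \<longrightarrow>
           opnorm_on (range J) (inv_into (range J) (\<lambda>x. E x - F x))
             = (1 - (onorm (E \<circ> F))\<^sup>2) powr (-1/2))
    \<and> (C2 \<and> E \<noteq> (\<lambda>_. 0) \<longrightarrow>
           opnorm_on (range (\<lambda>x. J x - F x)) (inv_into (range E) (\<lambda>x. J (E x) - F (E x)))
             = (1 - (onorm (E \<circ> F))\<^sup>2) powr (-1/2))"
proof -
  interpret tp: twoproj E F using assms(1,2) by (rule twoproj.intro)
  have JJ: "J = tp.J" unfolding J_def tp.J_def ..
  have h1: "C1 \<longleftrightarrow> tp.c < 1" unfolding C1_def JJ by (rule tp.L_C1)
  have h2: "C2 \<longleftrightarrow> tp.c < 1" unfolding C2_def JJ by (rule tp.L_C2)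
  have h3: "C3 \<longleftrightarrow> tp.c < 1" unfolding C3_def JJ by (rule tp.L_C3)
  have n2: "C2 \<and> J \<noteq> (\<lambda>_. 0) \<longrightarrow>
           opnorm_on (range J) (inv_into (range J) (\<lambda>x. E x - F x))
             = (1 - (onorm (E \<circ> F))\<^sup>2) powr (-1/2)"
    unfolding JJ tp.K_eq[symmetric] using h2 tp.L_N2 by blast
  have n3: "C2 \<and> E \<noteq> (\<lambda>_. 0) \<longrightarrow>
           opnorm_on (range (\<lambda>x. J x - F x)) (inv_into (range E) (\<lambda>x. J (E x) - F (E x)))
             = (1 - (onorm (E \<circ> F))\<^sup>2) powr (-1/2)"
    unfolding JJ tp.K_eq[symmetric] using h2 tp.L_N3 by blast
  show ?thesis using h1 h2 h3 n2 n3 by blast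
qed

end
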